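(* Let $n\ge q\ge 1$ and let $\mathcal{G}$ be a requirements graph on the $n$ factors $F_1,\dots,F_n$. There exists a blocked $2^n$ factorial in blocks of size $2^q$ from which all $n$ main effects and all two-factor interactions corresponding to edges of $\mathcal{G}$ are estimable if and only if the chromatic number of $\mathcal{G}$ is at most $2^q-1$.
   Context: A blocked $2^n$ factorial in blocks of size $2^q$ is specified by a $q\times n$ generator matrix $X$ over $\mathrm{GF}(2)$ of rank $q$: the principal block is the row space of $X$ and the other blocks are its cosets in $\mathrm{GF}(2)^n$. An effect of a set $S$ of factors, with contrast $(-1)^{\sum_{j\in S}x_j}$, is estimable iff its contrast sums to zero over every block. A requirements graph is a simple graph with vertex set $\{F_1,\dots,F_n\}$ and an edge $F_iF_j$ whenever the interaction $F_iF_j$ is required to be estimable. *)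

theory Defs
  imports Main
begin

text \<open>Vectors of GF(2)^n are modelled as functions nat => bool supported on {..<n};
  True = 1, False = 0; addition is pointwise exclusive or.\<close>

definition gf2_space :: "nat \<Rightarrow> (nat \<Rightarrow> bool) set" where
  "gf2_space n = {x. \<forall>j. n \<le> j \<longrightarrow> \<not> x j}"

definition vadd :: "(nat \<Rightarrow> bool) \<Rightarrow> (nat \<Rightarrow> bool) \<Rightarrow> nat \<Rightarrow> bool" where
  "vadd x y = (\<lambda>j. x j \<noteq> y j)"

text \<open>A q x n matrix X over GF(2): row i is X i (for i < q), entry X i j.
  GF(2)-sum of the rows indexed by T.\<close>

definition row_sum :: "(nat \<Rightarrow> nat \<Rightarrow> bool) \<Rightarrow> nat set \<Rightarrow> nat \<Rightarrow> bool" where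
  "row_sum X T = (\<lambda>j. odd (card {i\<in>T. X i j}))"

definition row_space :: "nat \<Rightarrow> (nat \<Rightarrow> nat \<Rightarrow> bool) \<Rightarrow> (nat \<Rightarrow> bool) set" where
  "row_space q X = {row_sum X T | T. T \<subseteq> {..<q}}"

definition has_rank_q :: "nat \<Rightarrow> (nat \<Rightarrow> nat \<Rightarrow> bool) \<Rightarrow> bool" where
  "has_rank_q q X \<longleftrightarrow> (\<forall>T. T \<subseteq> {..<q} \<longrightarrow> (\<forall>j. \<not> row_sum X T j) \<longrightarrow> T = {})"

text \<open>A blocked 2^n factorial in blocks of size 2^q: a q x n generator matrix over GF(2) of rank q.\<close>

definition blocked_design :: "nat \<Rightarrow> nat \<Rightarrow> (nat \<Rightarrow> nat \<Rightarrow> bool) \<Rightarrow> bool" where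
  "blocked_design n q X \<longleftrightarrow> (\<forall>i<q. X i \<in> gf2_space n) \<and> has_rank_q q X"

definition block :: "nat \<Rightarrow> (nat \<Rightarrow> nat \<Rightarrow> bool) \<Rightarrow> (nat \<Rightarrow> bool) \<Rightarrow> (nat \<Rightarrow> bool) set" where
  "block q X c = (\<lambda>r. vadd c r) ` row_space q X"

definition contrast :: "nat set \<Rightarrow> (nat \<Rightarrow> bool) \<Rightarrow> int" where
  "contrast S x = (-1) ^ card {j\<in>S. x j}"

definition estimable :: "nat \<Rightarrow> nat \<Rightarrow> (nat \<Rightarrow> nat \<Rightarrow> bool) \<Rightarrow> nat set \<Rightarrow> bool" where
  "estimable n q X S \<longleftrightarrow> (\<forall>c\<in>gf2_space n. (\<Sum>x\<in>block q X c. contrast S x) = 0)"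

text \<open>Simple graph on vertices {..<n} (factor F_(i+1) is vertex i).\<close>

definition requirements_graph :: "nat \<Rightarrow> (nat \<Rightarrow> nat \<Rightarrow> bool) \<Rightarrow> bool" where
  "requirements_graph n E \<longleftrightarrow> (\<forall>i j. E i j \<longrightarrow> i < n \<and> j < n \<and> i \<noteq> j \<and> E j i)"

definition colorable :: "nat \<Rightarrow> (nat \<Rightarrow> nat \<Rightarrow> bool) \<Rightarrow> nat \<Rightarrow> bool" where
  "colorable n E k \<longleftrightarrow> (\<exists>f::nat \<Rightarrow> nat. (\<forall>i<n. f i < k) \<and> (\<forall>i<n. \<forall>j<n. E i j \<longrightarrow> f i \<noteq> f j))"

definition chromatic_number :: "nat \<Rightarrow> (nat \<Rightarrow> nat \<Rightarrow> bool) \<Rightarrow> nat" where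
  "chromatic_number n E = (LEAST k. colorable n E k)"

end

theory Submission
  imports Defs
begin

definition nzV :: "nat \<Rightarrow> (nat \<Rightarrow> bool) set" where
  "nzV q = gf2_space q - {\<lambda>_. False}"

lemma gf2_space_eq: "gf2_space q = (\<lambda>A j. j \<in> A) ` Pow {..<q}"
proof -
  have "x \<in> (\<lambda>A j. j \<in> A) ` Pow {..<q}" if "x \<in> gf2_space q" for x
  proof
    show "x = (\<lambda>j. j \<in> {j. x j})" by simp
    show "{j. x j} \<in> Pow {..<q}" using that by (auto simp: gf2_space_def) (meson not_le)
  qed
  then show ?thesis by (auto simp: gf2_space_def)
qed

lemma card_gf2: "card (gf2_space q) = 2 ^ q" "finite (gf2_space q)"
proof -
  have inj: "inj_on (\<lambda>A j. j \<in> A) (Pow {..<q})"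
    by (auto simp: inj_on_def fun_eq_iff)
  show "card (gf2_space q) = 2 ^ q" unfolding gf2_space_eq
    using card_image[OF inj] by (simp add: card_Pow)
  show "finite (gf2_space q)" unfolding gf2_space_eq by simp
qed

lemma card_nzV: "card (nzV q) = 2 ^ q - 1" "finite (nzV q)"
proof -
  have "(\<lambda>_. False) \<in> gf2_space q" by (simp add: gf2_space_def)
  then show "card (nzV q) = 2 ^ q - 1" unfolding nzV_def
    using card_gf2 by (simp add: card_Diff_singleton)
  show "finite (nzV q)" unfolding nzV_def using card_gf2 by simp
qed

lemma odd_card_symdiff:
  assumes "finite A" "finite B"
  shows "odd (card ((A - B) \<union> (B - A))) \<longleftrightarrow> (odd (card A) \<noteq> odd (card B))"
proof -
  have 1: "card ((A - B) \<union> (B - A)) = card (A - B) + card (B - A)"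
    using assms by (intro card_Un_disjoint) auto
  have 2: "card (A - B) = card A - card (A \<inter> B)" using assms by (simp add: card_Diff_subset_Int)
  have 3: "card (B - A) = card B - card (A \<inter> B)" using assms
    by (metis card_Diff_subset_Int finite_Int inf_commute)
  have 4: "card (A \<inter> B) \<le> card A" "card (A \<inter> B) \<le> card B"
    using assms by (auto intro: card_mono)
  show ?thesis unfolding 1 2 3 using 4 by presburger
qed

lemma row_space_img: "row_space q X = row_sum X ` Pow {..<q}"
  by (auto simp: row_space_def)

lemma row_space_finite: "finite (row_space q X)"
  by (simp add: row_space_img)

lemma row_sum_add:
  assumes "finite T1" "finite T2"
  shows "vadd (row_sum X T1) (row_sum X T2) = row_sum X ((T1 - T2) \<union> (T2 - T1))"
proof
  fix j
  have e: "{i\<in>(T1 - T2) \<union> (T2 - T1). X i j} =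
      ({i\<in>T1. X i j} - {i\<in>T2. X i j}) \<union> ({i\<in>T2. X i j} - {i\<in>T1. X i j})" by auto
  show "vadd (row_sum X T1) (row_sum X T2) j = row_sum X ((T1 - T2) \<union> (T2 - T1)) j"
    unfolding vadd_def row_sum_def e using assms by (simp add: odd_card_symdiff)
qed

lemma row_space_add:
  assumes "r \<in> row_space q X" "s \<in> row_space q X"
  shows "vadd r s \<in> row_space q X"
proof -
  obtain T1 T2 where "T1 \<subseteq> {..<q}" "T2 \<subseteq> {..<q}" "r = row_sum X T1" "s = row_sum X T2"
    using assms by (auto simp: row_space_def)
  moreover then have "finite T1" "finite T2" by (auto intro: finite_subset)
  ultimately show ?thesis using row_sum_add[of T1 T2 X] unfolding row_space_def by blast
qed

lemma contrast_shift:
  assumes "finite S" "odd (card {j\<in>S. r j})"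
  shows "contrast S (vadd x r) = - contrast S x"
proof -
  have e: "{j\<in>S. vadd x r j} = ({j\<in>S. x j} - {j\<in>S. r j}) \<union> ({j\<in>S. r j} - {j\<in>S. x j})"
    by (auto simp: vadd_def)
  have "odd (card {j\<in>S. vadd x r j}) \<longleftrightarrow> even (card {j\<in>S. x j})"
    unfolding e using assms by (simp add: odd_card_symdiff)
  then show ?thesis unfolding contrast_def by (simp add: minus_one_power_iff)
qed

lemma estimable_if:
  assumes "finite S" "r0 \<in> row_space q X" "odd (card {j\<in>S. r0 j})"
  shows "estimable n q X S"
  unfolding estimable_def
proof
  fix c
  let ?B = "block q X c"
  let ?t = "\<lambda>x. vadd x r0"
  have maps: "?t x \<in> ?B" if xB: "x \<in> ?B" for x
  proof -
    obtain r where r: "r \<in> row_space q X" "x = vadd c r" using xB unfolding block_def by blast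
    have "?t x = vadd c (vadd r r0)" using r by (auto simp: vadd_def)
    then show ?thesis using row_space_add[OF r(1) assms(2)] by (auto simp: block_def)
  qed
  have inv: "?t (?t x) = x" for x by (auto simp: vadd_def)
  have bij: "bij_betw ?t ?B ?B"
    by (rule bij_betw_byWitness[where f' = ?t]) (use maps inv in auto)
  have "(\<Sum>x\<in>?B. contrast S x) = (\<Sum>x\<in>?B. contrast S (?t x))"
    using sum.reindex_bij_betw[OF bij, of "contrast S"] by simp
  also have "\<dots> = - (\<Sum>x\<in>?B. contrast S x)"
    using contrast_shift[OF assms(1,3)] by (simp add: sum_negf)
  finally show "(\<Sum>x\<in>?B. contrast S x) = 0" by simp
qed

lemma not_estimable:
  assumes "\<forall>r\<in>row_space q X. even (card {j\<in>S. r j})"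
  shows "\<not> estimable n q X S"
proof
  assume est: "estimable n q X S"
  have z: "(\<lambda>_. False) \<in> gf2_space n" by (simp add: gf2_space_def)
  have b: "block q X (\<lambda>_. False) = row_space q X"
  proof -
    have "vadd (\<lambda>_. False) r = r" for r by (auto simp: vadd_def)
    then show ?thesis by (simp add: block_def)
  qed
  have "(\<Sum>x\<in>row_space q X. contrast S x) = (\<Sum>x\<in>row_space q X. 1)"
    using assms by (intro sum.cong) (auto simp: contrast_def)
  also have "\<dots> = int (card (row_space q X))" by simp
  also have "\<dots> > 0"
  proof -
    have "row_sum X {} \<in> row_space q X" by (auto simp: row_space_def)
    then show ?thesis using row_space_finite card_gt_0_iff by fastforce
  qed
  finally show False using est z b unfolding estimable_def by force
qed


lemma improve:
  assumes qn: "q \<le> n" and v0: "\<forall>j<n. v0 j \<in> nzV q"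
    and p0: "\<forall>i<n. \<forall>j<n. E i j \<longrightarrow> i \<noteq> j \<longrightarrow> v0 i \<noteq> v0 j"
  shows "\<exists>v. (\<forall>j<n. v j \<in> nzV q) \<and> (\<forall>i<n. \<forall>j<n. E i j \<longrightarrow> i \<noteq> j \<longrightarrow> v i \<noteq> v j)
              \<and> (\<forall>t<q. \<exists>j<n. v j = (\<lambda>s. s = t))"
proof -
  define P where "P v \<longleftrightarrow> (\<forall>j<n. v j \<in> nzV q) \<and> (\<forall>i<n. \<forall>j<n. E i j \<longrightarrow> i \<noteq> j \<longrightarrow> v i \<noteq> v j)"
    for v :: "nat \<Rightarrow> nat \<Rightarrow> bool"
  define U where "U v = {t\<in>{..<q}. \<exists>j<n. v j = (\<lambda>s. s = t)}" for v :: "nat \<Rightarrow> nat \<Rightarrow> bool"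
  have Ufin: "finite (U v)" for v by (simp add: U_def)
  have Ub: "card (U v) < Suc q" for v
  proof -
    have "card (U v) \<le> card {..<q}" by (rule card_mono) (auto simp: U_def)
    then show ?thesis by simp
  qed
  have "P v0" using v0 p0 by (simp add: P_def)
  then obtain v where Pv: "P v" and mx: "\<forall>w. P w \<longrightarrow> card (U w) \<le> card (U v)"
    using ex_has_greatest_nat[of P v0 "\<lambda>v. card (U v)" "Suc q"] Ub by blast
  have all: "t \<in> U v" if tq: "t < q" for t
  proof (rule ccontr)
    assume tU: "t \<notin> U v"
    let ?e = "\<lambda>t::nat. \<lambda>s::nat. s = t"
    have "\<exists>a<n. (\<forall>s<q. v a \<noteq> ?e s) \<or> (\<exists>b<n. b \<noteq> a \<and> v b = v a)"
    proof (rule ccontr)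
      assume neg: "\<not> ?thesis"
      have inj: "inj_on v {..<n}" using neg by (auto simp: inj_on_def)
      have sub: "v ` {..<n} \<subseteq> ?e ` ({..<q} - {t})"
      proof
        fix y assume "y \<in> v ` {..<n}"
        then obtain a where a: "a < n" "y = v a" by auto
        then obtain s where s: "s < q" "v a = ?e s" using neg by blast
        have "s \<noteq> t" using tU s a by (auto simp: U_def)
        then show "y \<in> ?e ` ({..<q} - {t})" using s a by auto
      qed
      have "n = card (v ` {..<n})" using card_image[OF inj] by simp
      also have "\<dots> \<le> card (?e ` ({..<q} - {t}))" by (rule card_mono[OF _ sub]) simp
      also have "\<dots> \<le> card ({..<q} - {t})" by (rule card_image_le) simp
      also have "\<dots> < q" using tq by simp
      finally show False using qn by simp
    qed
    then obtain a where a: "a < n" and ab: "(\<forall>s<q. v a \<noteq> ?e s) \<or> (\<exists>b<n. b \<noteq> a \<and> v b = v a)"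
      by blast
    define w where "w = v(a := ?e t)"
    have eV: "?e t \<in> nzV q" using tq by (auto simp: nzV_def gf2_space_def fun_eq_iff)
    have unused: "\<forall>j<n. v j \<noteq> ?e t" using tU tq by (auto simp: U_def)
    have Pw: "P w"
      using Pv eV unused unfolding P_def w_def by (auto simp: fun_upd_def)
    have "insert t (U v) \<subseteq> U w"
    proof
      fix s assume s: "s \<in> insert t (U v)"
      show "s \<in> U w"
      proof (cases "s = t")
        case True then show ?thesis using a tq by (auto simp: U_def w_def)
      next
        case False
        then have sU: "s \<in> U v" using s by auto
        then obtain j where j: "j < n" "v j = ?e s" "s < q" by (auto simp: U_def)
        show ?thesis
        proof (cases "j = a")
          case False then show ?thesis using j by (auto simp: U_def w_def)
        next
          case True
          then obtain b where "b < n" "b \<noteq> a" "v b = v a" using ab j by blast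
          then show ?thesis using j True by (auto simp: U_def w_def)
        qed
      qed
    qed
    then have "card (insert t (U v)) \<le> card (U w)" by (rule card_mono[OF Ufin])
    then have "card (U v) < card (U w)" using tU Ufin by simp
    then show False using mx Pw by fastforce
  qed
  show ?thesis using Pv all unfolding P_def U_def by blast
qed

theorem lemma1:
  fixes n q :: nat and E :: "nat \<Rightarrow> nat \<Rightarrow> bool"
  assumes "1 \<le> q" and "q \<le> n" and "requirements_graph n E"
  shows "(\<exists>X. blocked_design n q X
            \<and> (\<forall>i<n. estimable n q X {i})
            \<and> (\<forall>i<n. \<forall>j<n. E i j \<longrightarrow> estimable n q X {i, j}))
         \<longleftrightarrow> chromatic_number n E \<le> 2 ^ q - 1"
proof -
  have G: "E i j \<Longrightarrow> i < n \<and> j < n \<and> i \<noteq> j" for i j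
    using assms(3) by (auto simp: requirements_graph_def)
  have cn: "colorable n E n" unfolding colorable_def
    by (rule exI[of _ id]) (use G in auto)
  have chrom: "chromatic_number n E \<le> K \<longleftrightarrow> colorable n E K" for K
  proof
    assume le: "chromatic_number n E \<le> K"
    have "colorable n E (chromatic_number n E)"
      unfolding chromatic_number_def by (rule LeastI[of _ n]) (rule cn)
    then show "colorable n E K" using le unfolding colorable_def
      by (meson order_less_le_trans)
  next
    assume "colorable n E K"
    then show "chromatic_number n E \<le> K" unfolding chromatic_number_def by (rule Least_le)
  qed
  let ?K = "2 ^ q - 1 :: nat"
  show ?thesis unfolding chrom
  proof
    assume "\<exists>X. blocked_design n q X \<and> (\<forall>i<n. estimable n q X {i})
            \<and> (\<forall>i<n. \<forall>j<n. E i j \<longrightarrow> estimable n q X {i, j})"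
    then obtain X where e1: "\<forall>i<n. estimable n q X {i}"
      and e2: "\<forall>i<n. \<forall>j<n. E i j \<longrightarrow> estimable n q X {i, j}" by blast
    define v where "v i = (\<lambda>t. t < q \<and> X t i)" for i
    have rs: "r \<in> row_space q X \<Longrightarrow> \<exists>T\<subseteq>{..<q}. r = row_sum X T" for r
      by (auto simp: row_space_def)
    have vV: "v i \<in> nzV q" if i: "i < n" for i
    proof -
      have "v i \<in> gf2_space q" by (auto simp: v_def gf2_space_def)
      moreover have "v i \<noteq> (\<lambda>_. False)"
      proof
        assume z: "v i = (\<lambda>_. False)"
        have "\<forall>r\<in>row_space q X. even (card {j\<in>{i}. r j})"
        proof
          fix r assume "r \<in> row_space q X"
          then obtain T where T: "T \<subseteq> {..<q}" "r = row_sum X T" using rs by blast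
          have "{t\<in>T. X t i} = {}" using T z by (auto simp: v_def fun_eq_iff)
          then have "\<not> r i" using T(2) unfolding row_sum_def by (metis card.empty even_zero)
          then have "{j\<in>{i}. r j} = {}" by auto
          then show "even (card {j\<in>{i}. r j})" by (metis card.empty even_zero)
        qed
        then show False using not_estimable e1 i by blast
      qed
      ultimately show ?thesis by (simp add: nzV_def)
    qed
    have vd: "v i \<noteq> v j" if ij: "E i j" for i j
    proof
      assume eq: "v i = v j"
      have "\<forall>r\<in>row_space q X. even (card {k\<in>{i,j}. r k})"
      proof
        fix r assume "r \<in> row_space q X"
        then obtain T where T: "T \<subseteq> {..<q}" "r = row_sum X T" using rs by blast
        have "{t\<in>T. X t i} = {t\<in>T. X t j}" using T eq by (auto simp: v_def fun_eq_iff)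
        then have "r i = r j" using T by (simp add: row_sum_def)
        moreover have "i \<noteq> j" using G ij by blast
        ultimately have "{k\<in>{i,j}. r k} = (if r i then {i,j} else {})" by auto
          then show "even (card {k\<in>{i,j}. r k})" using \<open>i \<noteq> j\<close>
            by (metis card.empty card_2_iff even_zero even_numeral)
      qed
      then show False using not_estimable e2 G ij by blast
    qed
    obtain h where h: "bij_betw h (nzV q) {0..<card (nzV q)}"
      using ex_bij_betw_finite_nat[OF card_nzV(2)] by blast
    show "colorable n E ?K" unfolding colorable_def
    proof (intro exI[of _ "\<lambda>i. h (v i)"] conjI allI impI)
      fix i assume "i < n"
      then show "h (v i) < ?K" using h vV card_nzV(1) by (auto simp: bij_betw_def)
    next
      fix i j assume "i < n" "j < n" "E i j"
      then show "h (v i) \<noteq> h (v j)" using h vV vd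
        by (metis bij_betw_inv_into_left)
    qed
  next
    assume "colorable n E ?K"
    then obtain f where f1: "\<forall>i<n. f i < ?K" and f2: "\<forall>i<n. \<forall>j<n. E i j \<longrightarrow> f i \<noteq> f j"
      unfolding colorable_def by blast
    obtain g where g: "bij_betw g {0..<card (nzV q)} (nzV q)"
      using ex_bij_betw_nat_finite[OF card_nzV(2)] by blast
    have "\<forall>j<n. g (f j) \<in> nzV q" using f1 g card_nzV(1) by (auto simp: bij_betw_def)
    moreover have "\<forall>i<n. \<forall>j<n. E i j \<longrightarrow> i \<noteq> j \<longrightarrow> g (f i) \<noteq> g (f j)"
    proof (intro allI impI)
      fix i j assume ij: "i < n" "j < n" "E i j" "i \<noteq> j"
      have "f i \<in> {0..<card (nzV q)}" "f j \<in> {0..<card (nzV q)}" "f i \<noteq> f j"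
        using f1 f2 ij card_nzV(1) by auto
      moreover have "inj_on g {0..<card (nzV q)}" using g by (simp add: bij_betw_def)
      ultimately show "g (f i) \<noteq> g (f j)" by (metis inj_onD)
    qed
    ultimately have "\<exists>v. (\<forall>j<n. v j \<in> nzV q) \<and> (\<forall>i<n. \<forall>j<n. E i j \<longrightarrow> i \<noteq> j \<longrightarrow> v i \<noteq> v j)
              \<and> (\<forall>t<q. \<exists>j<n. v j = (\<lambda>s. s = t))" by (rule improve[OF assms(2)])
    then obtain v where vV: "\<forall>j<n. v j \<in> nzV q"
      and vp: "\<forall>i<n. \<forall>j<n. E i j \<longrightarrow> i \<noteq> j \<longrightarrow> v i \<noteq> v j"
      and ve: "\<forall>t<q. \<exists>j<n. v j = (\<lambda>s. s = t)"
      by blast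
    define X where "X t j = (j < n \<and> v j t)" for t j
    have rs1: "row_sum X {t} j = X t j" for t j
    proof -
      have "{i\<in>{t}. X i j} = (if X t j then {t} else {})" by auto
      then show ?thesis by (simp add: row_sum_def)
    qed
    have t1: "{t} \<in> Pow {..<q}" if "t < q" for t using that by simp
    have design: "blocked_design n q X"
      unfolding blocked_design_def has_rank_q_def
    proof (intro conjI allI impI)
      fix i assume "i < q"
      show "X i \<in> gf2_space n" by (auto simp: X_def gf2_space_def)
    next
      fix T assume T: "T \<subseteq> {..<q}" and z: "\<forall>j. \<not> row_sum X T j"
      show "T = {}"
      proof (rule ccontr)
        assume "T \<noteq> {}"
        then obtain t where t: "t \<in> T" by blast
        then obtain j where j: "j < n" "v j = (\<lambda>s. s = t)" using ve T by blast
        have "{i\<in>T. X i j} = {t}" using j t by (auto simp: X_def)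
        then have "row_sum X T j" by (simp add: row_sum_def)
        then show False using z by blast
      qed
    qed
    have vq: "v j t \<Longrightarrow> j < n \<Longrightarrow> t < q" for j t
    proof (rule ccontr)
      assume a: "v j t" "j < n" "\<not> t < q"
      then have "v j \<in> gf2_space q" using vV by (simp add: nzV_def)
      then show False using a by (simp add: gf2_space_def)
    qed
    have est1: "estimable n q X {i}" if i: "i < n" for i
    proof -
      obtain t where t: "v i t" using vV i by (auto simp: nzV_def fun_eq_iff)
      have "t < q" using vq t i by blast
      then have rr: "row_sum X {t} \<in> row_space q X" by (auto simp: row_space_def)
      have "{j\<in>{i}. row_sum X {t} j} = {i}" using t i by (auto simp: rs1 X_def)
      then have od: "odd (card {j\<in>{i}. row_sum X {t} j})" by simp
      show ?thesis by (rule estimable_if[OF _ rr od]) simp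
    qed
    have est2: "estimable n q X {i, j}" if ij: "i < n" "j < n" "E i j" for i j
    proof -
      have ne: "i \<noteq> j" using G ij by blast
      have "v i \<noteq> v j" using vp ij ne by blast
      then obtain t where t: "v i t \<noteq> v j t" by (auto simp: fun_eq_iff)
      have "t < q" using vq t ij by blast
      then have rr: "row_sum X {t} \<in> row_space q X" by (auto simp: row_space_def)
      have "{k\<in>{i,j}. row_sum X {t} k} = (if v i t then {i} else {j})"
        using t ij ne by (auto simp: rs1 X_def)
      then have od: "odd (card {k\<in>{i,j}. row_sum X {t} k})" by simp
      show ?thesis by (rule estimable_if[OF _ rr od]) simp
    qed
    show "\<exists>X. blocked_design n q X \<and> (\<forall>i<n. estimable n q X {i})
            \<and> (\<forall>i<n. \<forall>j<n. E i j \<longrightarrow> estimable n q X {i, j})"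
      using design est1 est2 by blast
  qed
qed

end
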